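(* Let $\vec{G}$ be a DDMOG of order $n$, let $g$ be a DDM labeling of $\vec{G}$, and let $u\in V(\vec{G})$ satisfy $g(u)=n$. Let $\vec{H}$ be a DDMOG of order $m$, let $h$ be a DDM labeling of $\vec{H}$, and let $w\in V(\vec{H})$ satisfy $h(w)=1$. If $\vec{H}$ is balanced, then the vertex coalescence $\vec{K}=\vec{G}\cdot_{uw}\vec{H}$ is a DDMOG on $n+m-1$ vertices.
   Context: An oriented graph is a finite digraph without loops such that whenever $(u,v)$ is an arc, $(v,u)$ is not. For a vertex $v$, $N^+(v)=\{x:(x,v)\text{ is an arc}\}$, $N^-(v)=\{x:(v,x)\text{ is an arc}\}$, $imb(v)=|N^+(v)|-|N^-(v)|$; the oriented graph is balanced if $imb(v)=0$ for all $v$. For a labeling $f$, $wt_f(v)=\sum_{x\in N^+(v)}f(x)-\sum_{x\in N^-(v)}f(x)$. A DDM labeling of an oriented graph on $n$ vertices is a bijection $f:V\to\{1,\dots,n\}$ with $wt_f(v)=0$ for all $v$; a DDMOG is an oriented graph admitting a DDM labeling. For a vertex $u$ of $\vec{G_1}$ and a vertex $v$ of $\vec{G_2}$ (vertex-disjoint oriented graphs), the vertex coalescence $\vec{G_1}\cdot_{uv}\vec{G_2}$ is obtained from the disjoint union $\vec{G_1}\cup\vec{G_2}$ by adding the arc $(u,x)$ for every arc $(v,x)$ of $\vec{G_2}$, adding the arc $(x,u)$ for every arc $(x,v)$ of $\vec{G_2}$, and then deleting $v$. *)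

theory Defs
  imports Main
begin

definition oriented_graph :: "'a set \<Rightarrow> ('a \<times> 'a) set \<Rightarrow> bool" where
  "oriented_graph V A \<longleftrightarrow> finite V \<and> A \<subseteq> V \<times> V \<and>
     (\<forall>x. (x, x) \<notin> A) \<and> (\<forall>u v. (u, v) \<in> A \<longrightarrow> (v, u) \<notin> A)"

text \<open>As in the paper: N+(v) = {x. (x,v) arc}, N-(v) = {x. (v,x) arc}.\<close>
definition in_nbrs :: "('a \<times> 'a) set \<Rightarrow> 'a \<Rightarrow> 'a set" where
  "in_nbrs A v = {x. (x, v) \<in> A}"

definition out_nbrs :: "('a \<times> 'a) set \<Rightarrow> 'a \<Rightarrow> 'a set" where
  "out_nbrs A v = {x. (v, x) \<in> A}"

definition imb :: "('a \<times> 'a) set \<Rightarrow> 'a \<Rightarrow> int" where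
  "imb A v = int (card (in_nbrs A v)) - int (card (out_nbrs A v))"

definition balanced :: "'a set \<Rightarrow> ('a \<times> 'a) set \<Rightarrow> bool" where
  "balanced V A \<longleftrightarrow> (\<forall>v\<in>V. imb A v = 0)"

definition wt :: "('a \<times> 'a) set \<Rightarrow> ('a \<Rightarrow> nat) \<Rightarrow> 'a \<Rightarrow> int" where
  "wt A f v = (\<Sum>x\<in>in_nbrs A v. int (f x)) - (\<Sum>x\<in>out_nbrs A v. int (f x))"

definition DDM_labeling :: "'a set \<Rightarrow> ('a \<times> 'a) set \<Rightarrow> ('a \<Rightarrow> nat) \<Rightarrow> bool" where
  "DDM_labeling V A f \<longleftrightarrow> bij_betw f V {1..card V} \<and> (\<forall>v\<in>V. wt A f v = 0)"

definition DDMOG :: "'a set \<Rightarrow> ('a \<times> 'a) set \<Rightarrow> bool" where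
  "DDMOG V A \<longleftrightarrow> oriented_graph V A \<and> (\<exists>f. DDM_labeling V A f)"

text \<open>Vertex coalescence G1 .uv G2 (vertex sets assumed disjoint): vertex v of G2 is
  identified with (replaced by) vertex u of G1.\<close>
definition coalesce_verts :: "'a set \<Rightarrow> 'a set \<Rightarrow> 'a \<Rightarrow> 'a set" where
  "coalesce_verts V1 V2 v = V1 \<union> (V2 - {v})"

definition coalesce_arcs ::
  "('a \<times> 'a) set \<Rightarrow> ('a \<times> 'a) set \<Rightarrow> 'a \<Rightarrow> 'a \<Rightarrow> ('a \<times> 'a) set" where
  "coalesce_arcs A1 A2 u v =
     A1 \<union> {(x, y). (x, y) \<in> A2 \<and> x \<noteq> v \<and> y \<noteq> v}
        \<union> {(u, x) | x. (v, x) \<in> A2} \<union> {(x, u) | x. (x, v) \<in> A2}"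

end

theory Submission
  imports Defs
begin

theorem theorem2:
  fixes VG VH :: "'a set" and AG AH :: "('a \<times> 'a) set"
    and g h :: "'a \<Rightarrow> nat" and u w :: 'a and n m :: nat
  assumes disj: "VG \<inter> VH = {}"
    and G: "DDMOG VG AG" and nG: "card VG = n"
    and g: "DDM_labeling VG AG g" and u: "u \<in> VG" and gu: "g u = n"
    and H: "DDMOG VH AH" and mH: "card VH = m"
    and h: "DDM_labeling VH AH h" and w: "w \<in> VH" and hw: "h w = 1"
    and bal: "balanced VH AH"
  shows "DDMOG (coalesce_verts VG VH w) (coalesce_arcs AG AH u w)
       \<and> card (coalesce_verts VG VH w) = n + m - 1"
proof -
  have fG: "finite VG" and AGs: "AG \<subseteq> VG \<times> VG" and loopG: "\<And>x. (x,x) \<notin> AG"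
    and asG: "\<And>x y. (x,y) \<in> AG \<Longrightarrow> (y,x) \<notin> AG"
    using G unfolding DDMOG_def oriented_graph_def by blast+
  have fH: "finite VH" and AHs: "AH \<subseteq> VH \<times> VH" and loopH: "\<And>x. (x,x) \<notin> AH"
    and asH: "\<And>x y. (x,y) \<in> AH \<Longrightarrow> (y,x) \<notin> AH"
    using H unfolding DDMOG_def oriented_graph_def by blast+
  have gb: "bij_betw g VG {1..n}" and gw: "\<And>v. v \<in> VG \<Longrightarrow> wt AG g v = 0"
    using g nG unfolding DDM_labeling_def by auto
  have hb: "bij_betw h VH {1..m}" and hwt: "\<And>v. v \<in> VH \<Longrightarrow> wt AH h v = 0"
    using h mH unfolding DDM_labeling_def by auto
  have himb: "\<And>v. v \<in> VH \<Longrightarrow> imb AH v = 0" using bal unfolding balanced_def by auto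
  have n1: "n \<ge> 1" using u fG nG card_0_eq[OF fG] by (cases n) auto
  have m1: "m \<ge> 1" using w fH mH card_0_eq[OF fH] by (cases m) auto
  define phi where "phi = (\<lambda>x. if x = w then u else x)"
  define F where "F = (\<lambda>x. if x \<in> VG then g x else h x + (n - 1))"
  define KV where "KV = coalesce_verts VG VH w"
  define KA where "KA = coalesce_arcs AG AH u w"
  have KV: "KV = VG \<union> (VH - {w})" unfolding KV_def coalesce_verts_def by simp
  have KA: "KA = AG \<union> (\<lambda>(a,b). (phi a, phi b)) ` AH"
  proof -
    have "(\<lambda>(a,b). (phi a, phi b)) ` AH =
      {(x, y). (x, y) \<in> AH \<and> x \<noteq> w \<and> y \<noteq> w}
        \<union> {(u, x) | x. (w, x) \<in> AH} \<union> {(x, u) | x. (x, w) \<in> AH}"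
      (is "?L = ?R")
    proof
      show "?L \<subseteq> ?R"
      proof
        fix p assume "p \<in> ?L"
        then obtain a b where ab: "(a,b) \<in> AH" "p = (phi a, phi b)" by auto
        have "a \<noteq> b" using ab loopH by auto
        then show "p \<in> ?R" using ab unfolding phi_def by auto
      qed
      show "?R \<subseteq> ?L"
      proof
        fix p assume "p \<in> ?R"
        then consider (a) a b where "p = (a,b)" "(a,b) \<in> AH" "a \<noteq> w" "b \<noteq> w"
          | (b) x where "p = (u,x)" "(w,x) \<in> AH" | (c) x where "p = (x,u)" "(x,w) \<in> AH"
          by blast
        then show "p \<in> ?L"
        proof cases
          case a then show ?thesis unfolding phi_def by (auto intro!: image_eqI[where x="(a,b)"])
        next
          case b then have "x \<noteq> w" using loopH by auto
          with b show ?thesis unfolding phi_def by (auto intro!: image_eqI[where x="(w,x)"])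
        next
          case c then have "x \<noteq> w" using loopH by auto
          with c show ?thesis unfolding phi_def by (auto intro!: image_eqI[where x="(x,w)"])
        qed
      qed
    qed
    then show ?thesis unfolding KA_def coalesce_arcs_def by auto
  qed
  have phiV: "\<And>x. x \<in> VH \<Longrightarrow> phi x \<in> KV" unfolding phi_def KV using u by auto
  have phi_inj: "inj_on phi VH" unfolding inj_on_def phi_def using u disj by auto
  have Fphi: "\<And>x. x \<in> VH \<Longrightarrow> F (phi x) = h x + (n - 1)"
    unfolding F_def phi_def using gu hw disj u n1 by auto
  have FG: "\<And>x. x \<in> VG \<Longrightarrow> F x = g x" unfolding F_def by auto
  have finKV: "finite KV" using fG fH KV by auto
  have cardKV: "card KV = n + m - 1"
  proof -
    have "card KV = card VG + card (VH - {w})" unfolding KV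
      using fG fH disj by (subst card_Un_disjoint) auto
    also have "\<dots> = n + (m - 1)" using nG mH w fH by simp
    finally show ?thesis using m1 by simp
  qed
  have orient: "oriented_graph KV KA"
  proof -
    have s: "KA \<subseteq> KV \<times> KV" unfolding KA using AGs AHs phiV KV by auto
    have l: "\<And>x. (x,x) \<notin> KA"
    proof
      fix x assume "(x,x) \<in> KA"
      then consider "(x,x) \<in> AG" | a b where "(a,b) \<in> AH" "phi a = x" "phi b = x"
        unfolding KA by auto
      then show False
      proof cases
        case 1 then show ?thesis using loopG by auto
      next
        case 2 then have "a = b" using phi_inj AHs unfolding inj_on_def by auto
        then show ?thesis using 2 loopH by auto
      qed
    qed
    have a: "\<And>x y. (x,y) \<in> KA \<Longrightarrow> (y,x) \<notin> KA"
    proof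
      fix x y assume xy: "(x,y) \<in> KA" and yx: "(y,x) \<in> KA"
      have r: "\<And>a b. (a,b) \<in> AH \<Longrightarrow> phi a \<notin> VG \<or> phi b \<notin> VG"
        unfolding phi_def using AHs disj loopH by auto
      have r2: "\<And>x y. (x,y) \<in> AG \<Longrightarrow> x \<in> VG \<and> y \<in> VG" using AGs by auto
      from xy consider "(x,y) \<in> AG" | a b where "(a,b) \<in> AH" "phi a = x" "phi b = y"
        unfolding KA by auto
      then show False
      proof cases
        case 1
        from yx consider "(y,x) \<in> AG" | a b where "(a,b) \<in> AH" "phi a = y" "phi b = x"
          unfolding KA by auto
        then show ?thesis
        proof cases
          case 1 then show ?thesis using \<open>(x,y) \<in> AG\<close> asG by auto
        next
          case 2 then show ?thesis using r r2 \<open>(x,y) \<in> AG\<close> by blast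
        qed
      next
        case 2
        note ab = 2
        from yx consider "(y,x) \<in> AG" | c d where "(c,d) \<in> AH" "phi c = y" "phi d = x"
          unfolding KA by auto
        then show ?thesis
        proof cases
          case 1 then show ?thesis using r r2 ab by blast
        next
          case 2
          have "c = b" "d = a" using phi_inj AHs 2 ab unfolding inj_on_def by auto
          then show ?thesis using asH 2 ab by auto
        qed
      qed
    qed
    show ?thesis unfolding oriented_graph_def using finKV s l a by blast
  qed
  have bij: "bij_betw F KV {1..n+m-1}"
  proof -
    have hVH: "\<And>y. y \<in> VH \<Longrightarrow> y \<noteq> w \<Longrightarrow> 2 \<le> h y \<and> h y \<le> m"
    proof -
      fix y assume y: "y \<in> VH" "y \<noteq> w"
      have "h y \<in> {1..m}" using hb y bij_betwE by blast
      moreover have "h y \<noteq> h w" using hb y w unfolding bij_betw_def inj_on_def by blast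
      ultimately show "2 \<le> h y \<and> h y \<le> m" using hw by auto
    qed
    have gVG: "\<And>x. x \<in> VG \<Longrightarrow> 1 \<le> g x \<and> g x \<le> n" using gb bij_betwE by fastforce
    have inj: "inj_on F KV"
    proof (rule inj_onI)
      fix x y assume x: "x \<in> KV" and y: "y \<in> KV" and e: "F x = F y"
      show "x = y"
      proof (cases "x \<in> VG")
        case True
        show ?thesis
        proof (cases "y \<in> VG")
          case True then show ?thesis using \<open>x \<in> VG\<close> e gb unfolding F_def bij_betw_def inj_on_def by auto
        next
          case False then have "y \<in> VH" "y \<noteq> w" using y KV by auto
          then show ?thesis using e hVH gVG \<open>x \<in> VG\<close> False unfolding F_def by force
        qed
      next
        case False then have xx: "x \<in> VH" "x \<noteq> w" using x KV by auto
        show ?thesis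
        proof (cases "y \<in> VG")
          case True
          then show ?thesis using e hVH gVG xx False unfolding F_def by force
        next
          case False2: False then have "y \<in> VH" "y \<noteq> w" using y KV by auto
          then show ?thesis using e xx False False2 hb unfolding F_def bij_betw_def inj_on_def by auto
        qed
      qed
    qed
    have sub: "F ` KV \<subseteq> {1..n+m-1}"
    proof
      fix z assume "z \<in> F ` KV"
      then obtain x where x: "x \<in> KV" "z = F x" by auto
      show "z \<in> {1..n+m-1}"
      proof (cases "x \<in> VG")
        case True then show ?thesis using x gVG m1 unfolding F_def by force
      next
        case False then have "x \<in> VH" "x \<noteq> w" using x KV by auto
        then show ?thesis using x hVH n1 False unfolding F_def by force
      qed
    qed
    have "card (F ` KV) = card {1..n+m-1}" using inj cardKV card_image by fastforce
    then have "F ` KV = {1..n+m-1}" using sub by (intro card_subset_eq) auto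
    then show ?thesis using inj unfolding bij_betw_def by auto
  qed
  have inG: "\<And>v. in_nbrs AG v \<subseteq> VG" "\<And>v. out_nbrs AG v \<subseteq> VG"
    using AGs unfolding in_nbrs_def out_nbrs_def by auto
  have inH: "\<And>v. in_nbrs AH v \<subseteq> VH" "\<And>v. out_nbrs AH v \<subseteq> VH"
    using AHs unfolding in_nbrs_def out_nbrs_def by auto
  have finG: "\<And>v. finite (in_nbrs AG v)" "\<And>v. finite (out_nbrs AG v)"
    by (rule finite_subset[OF inG(1) fG], rule finite_subset[OF inG(2) fG])
  have finH: "\<And>v. finite (in_nbrs AH v)" "\<And>v. finite (out_nbrs AH v)"
    by (rule finite_subset[OF inH(1) fH], rule finite_subset[OF inH(2) fH])
  have sumG: "\<And>S. S \<subseteq> VG \<Longrightarrow> (\<Sum>x\<in>S. int (F x)) = (\<Sum>x\<in>S. int (g x))"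
    using FG by (intro sum.cong) auto
  have sumH: "\<And>S. S \<subseteq> VH \<Longrightarrow> finite S \<Longrightarrow>
      (\<Sum>x\<in>phi ` S. int (F x)) = (\<Sum>x\<in>S. int (h x)) + int (card S) * (int n - 1)"
  proof -
    fix S assume S: "S \<subseteq> VH" "finite S"
    have "(\<Sum>x\<in>phi ` S. int (F x)) = (\<Sum>x\<in>S. int (F (phi x)))"
      using S phi_inj inj_on_subset by (subst sum.reindex) auto
    also have "\<dots> = (\<Sum>x\<in>S. int (h x) + (int n - 1))"
      using S Fphi n1 by (intro sum.cong) auto
    also have "\<dots> = (\<Sum>x\<in>S. int (h x)) + int (card S) * (int n - 1)"
      by (simp add: sum.distrib)
    finally show "(\<Sum>x\<in>phi ` S. int (F x)) = (\<Sum>x\<in>S. int (h x)) + int (card S) * (int n - 1)" .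
  qed
  have phi_arc: "\<And>a b. (a,b) \<in> AH \<Longrightarrow> phi a \<in> VG \<Longrightarrow> a = w"
    unfolding phi_def using AHs disj by auto
  have inK: "\<And>v. v \<in> VH \<Longrightarrow> in_nbrs KA (phi v) =
      (if v = w then in_nbrs AG u else {}) \<union> phi ` in_nbrs AH v"
  proof -
    fix v assume v: "v \<in> VH"
    show "in_nbrs KA (phi v) = (if v = w then in_nbrs AG u else {}) \<union> phi ` in_nbrs AH v"
    proof (rule set_eqI)
      fix x
      have "x \<in> in_nbrs KA (phi v) \<longleftrightarrow> (x, phi v) \<in> AG \<or> (\<exists>a b. (a,b) \<in> AH \<and> x = phi a \<and> phi v = phi b)"
        unfolding in_nbrs_def KA by auto
      also have "\<dots> \<longleftrightarrow> (v = w \<and> (x, u) \<in> AG) \<or> (\<exists>a. (a,v) \<in> AH \<and> x = phi a)"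
      proof -
        have "(x, phi v) \<in> AG \<longleftrightarrow> v = w \<and> (x, u) \<in> AG"
          using AGs v disj unfolding phi_def by auto
        moreover have "(\<exists>a b. (a,b) \<in> AH \<and> x = phi a \<and> phi v = phi b) \<longleftrightarrow> (\<exists>a. (a,v) \<in> AH \<and> x = phi a)"
          using phi_inj v AHs unfolding inj_on_def by blast
        ultimately show ?thesis by blast
      qed
      finally show "x \<in> in_nbrs KA (phi v) \<longleftrightarrow> x \<in> (if v = w then in_nbrs AG u else {}) \<union> phi ` in_nbrs AH v"
        unfolding in_nbrs_def by auto
    qed
  qed
  have outK: "\<And>v. v \<in> VH \<Longrightarrow> out_nbrs KA (phi v) =
      (if v = w then out_nbrs AG u else {}) \<union> phi ` out_nbrs AH v"
  proof -
    fix v assume v: "v \<in> VH"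
    show "out_nbrs KA (phi v) = (if v = w then out_nbrs AG u else {}) \<union> phi ` out_nbrs AH v"
    proof (rule set_eqI)
      fix x
      have "x \<in> out_nbrs KA (phi v) \<longleftrightarrow> (phi v, x) \<in> AG \<or> (\<exists>a b. (a,b) \<in> AH \<and> phi v = phi a \<and> x = phi b)"
        unfolding out_nbrs_def KA by auto
      also have "\<dots> \<longleftrightarrow> (v = w \<and> (u, x) \<in> AG) \<or> (\<exists>b. (v,b) \<in> AH \<and> x = phi b)"
      proof -
        have "(phi v, x) \<in> AG \<longleftrightarrow> v = w \<and> (u, x) \<in> AG"
          using AGs v disj unfolding phi_def by auto
        moreover have "(\<exists>a b. (a,b) \<in> AH \<and> phi v = phi a \<and> x = phi b) \<longleftrightarrow> (\<exists>b. (v,b) \<in> AH \<and> x = phi b)"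
          using phi_inj v AHs unfolding inj_on_def by blast
        ultimately show ?thesis by blast
      qed
      finally show "x \<in> out_nbrs KA (phi v) \<longleftrightarrow> x \<in> (if v = w then out_nbrs AG u else {}) \<union> phi ` out_nbrs AH v"
        unfolding out_nbrs_def by auto
    qed
  qed
  have phiVH: "\<And>S. S \<subseteq> VH \<Longrightarrow> phi ` S \<inter> VG \<subseteq> {u}" unfolding phi_def using disj by auto
  have wtH: "\<And>v. v \<in> VH \<Longrightarrow> wt KA F (phi v) = (if v = w then wt AG g u else 0)"
  proof -
    fix v assume v: "v \<in> VH"
    have nu: "\<And>x. x \<in> in_nbrs AH v \<Longrightarrow> phi x \<noteq> u" "\<And>x. x \<in> out_nbrs AH v \<Longrightarrow> phi x \<noteq> u"
      if "v = w"
      using that loopH AHs u disj unfolding phi_def in_nbrs_def out_nbrs_def by auto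
    have d1: "(if v = w then in_nbrs AG u else {}) \<inter> phi ` in_nbrs AH v = {}"
    proof -
      { fix x assume x: "x \<in> in_nbrs AH v" "phi x \<in> in_nbrs AG u" "v = w"
        have "phi x \<in> VG" using x(2) inG(1) by blast
        moreover have "phi x \<in> phi ` in_nbrs AH v" using x(1) by blast
        ultimately have "phi x = u" using phiVH[OF inH(1), of v] by blast
        hence False using nu(1)[OF x(3) x(1)] by simp }
      thus ?thesis by auto
    qed
    have d2: "(if v = w then out_nbrs AG u else {}) \<inter> phi ` out_nbrs AH v = {}"
    proof -
      { fix x assume x: "x \<in> out_nbrs AH v" "phi x \<in> out_nbrs AG u" "v = w"
        have "phi x \<in> VG" using x(2) inG(2) by blast
        moreover have "phi x \<in> phi ` out_nbrs AH v" using x(1) by blast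
        ultimately have "phi x = u" using phiVH[OF inH(2), of v] by blast
        hence False using nu(2)[OF x(3) x(1)] by simp }
      thus ?thesis by auto
    qed
    have si: "(\<Sum>x\<in>in_nbrs KA (phi v). int (F x)) =
        (if v = w then (\<Sum>x\<in>in_nbrs AG u. int (g x)) else 0) +
        ((\<Sum>x\<in>in_nbrs AH v. int (h x)) + int (card (in_nbrs AH v)) * (int n - 1))"
      unfolding inK[OF v] using d1 finG finH sumG[OF inG(1)] sumH[OF inH(1) finH(1)]
      by (subst sum.union_disjoint) auto
    have so: "(\<Sum>x\<in>out_nbrs KA (phi v). int (F x)) =
        (if v = w then (\<Sum>x\<in>out_nbrs AG u. int (g x)) else 0) +
        ((\<Sum>x\<in>out_nbrs AH v. int (h x)) + int (card (out_nbrs AH v)) * (int n - 1))"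
      unfolding outK[OF v] using d2 finG finH sumG[OF inG(2)] sumH[OF inH(2) finH(2)]
      by (subst sum.union_disjoint) auto
    have e1: "(\<Sum>x\<in>in_nbrs AH v. int (h x)) = (\<Sum>x\<in>out_nbrs AH v. int (h x))"
      using hwt[OF v] unfolding wt_def by simp
    have e2: "int (card (in_nbrs AH v)) = int (card (out_nbrs AH v))"
      using himb[OF v] unfolding imb_def by simp
    show "wt KA F (phi v) = (if v = w then wt AG g u else 0)"
      unfolding wt_def si so e1 e2 by auto
  qed
  have wts: "\<And>v. v \<in> KV \<Longrightarrow> wt KA F v = 0"
  proof -
    fix v assume v: "v \<in> KV"
    show "wt KA F v = 0"
    proof (cases "v \<in> VG \<and> v \<noteq> u")
      case True
      have i: "in_nbrs KA v = in_nbrs AG v" "out_nbrs KA v = out_nbrs AG v"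
      proof -
        have nb: "\<And>b. b \<in> VH \<Longrightarrow> phi b \<noteq> v" unfolding phi_def using True disj by auto
        have "\<And>a b. (a,b) \<in> AH \<Longrightarrow> phi b \<noteq> v \<and> phi a \<noteq> v" using nb AHs by blast
        then show "in_nbrs KA v = in_nbrs AG v" "out_nbrs KA v = out_nbrs AG v"
          unfolding in_nbrs_def out_nbrs_def KA by fastforce+
      qed
      have "wt KA F v = wt AG g v" unfolding wt_def i
        using sumG[OF inG(1)] sumG[OF inG(2)] by simp
      then show ?thesis using gw True by simp
    next
      case False
      then have "v = u \<or> (v \<in> VH \<and> v \<noteq> w)" using v KV by auto
      then obtain y where "y \<in> VH" "v = phi y" using w unfolding phi_def by auto
      then show ?thesis using wtH gw u by auto
    qed
  qed
  have "DDMOG KV KA" unfolding DDMOG_def DDM_labeling_def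
    using orient bij wts cardKV by auto
  then show ?thesis using cardKV unfolding KV_def KA_def by simp
qed

end
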